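(* Let $f$ be an entire function on $\mathbb{C}$ which is not identically zero. Then the vector-valued holomorphic functions $\Phi_f$ and $\Psi_f$ on $\mathbb{C}^k$ are not identically zero.
   Context: Fix an integer $k\ge 2$. Use coordinates $s=(s_1,\dots,s_k)$ on $\mathbb{C}^k$, set $s_0:=1$, $P_s(z):=\sum_{h=0}^k(-1)^hs_hz^{k-h}$ and $P_s'(z):=\partial_zP_s(z)$. Let $E(z):=(1,z,\dots,z^{k-1})^T$. For an entire function $f$, define the $\mathbb{C}^k$-valued holomorphic functions $$\Phi_f(s):=\frac{1}{2i\pi}\int_{|\zeta|=R}\frac{f(\zeta)E(\zeta)\,d\zeta}{P_s(\zeta)},\qquad \Psi_f(s):=\frac{1}{2i\pi}\int_{|\zeta|=R}\frac{f(\zeta)E(\zeta)P'_s(\zeta)\,d\zeta}{P_s(\zeta)},$$ where $R$ is large enough that all roots of $P_s$ lie in $\{|\zeta|<R\}$ (the integrals do not depend on such $R$). *)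

theory Defs
  imports "HOL-Complex_Analysis.Complex_Analysis"
begin

text \<open>Coordinates s = (s_1,...,s_k) of C^k are encoded as a function nat => complex;
  only the values s 1, ..., s k matter, and s_0 := 1 is imposed in the definition.\<close>

definition coordP :: "(nat \<Rightarrow> complex) \<Rightarrow> nat \<Rightarrow> complex" where
  "coordP s h = (if h = 0 then 1 else s h)"

definition Ppoly :: "nat \<Rightarrow> (nat \<Rightarrow> complex) \<Rightarrow> complex \<Rightarrow> complex" where
  "Ppoly k s z = (\<Sum>h=0..k. (-1)^h * coordP s h * z ^ (k - h))"

text \<open>A radius strictly exceeding the modulus of every root (Cauchy bound);
  the integrals do not depend on any such choice.\<close>
definition rootRadius :: "nat \<Rightarrow> (nat \<Rightarrow> complex) \<Rightarrow> real" where
  "rootRadius k s = 1 + (\<Sum>h=1..k. cmod (s h))"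

definition PhiF :: "nat \<Rightarrow> (complex \<Rightarrow> complex) \<Rightarrow> (nat \<Rightarrow> complex) \<Rightarrow> nat \<Rightarrow> complex" where
  "PhiF k f s j = contour_integral (circlepath 0 (rootRadius k s))
      (\<lambda>\<zeta>. f \<zeta> * \<zeta> ^ j / Ppoly k s \<zeta>) / (2 * \<i> * pi)"

definition PsiF :: "nat \<Rightarrow> (complex \<Rightarrow> complex) \<Rightarrow> (nat \<Rightarrow> complex) \<Rightarrow> nat \<Rightarrow> complex" where
  "PsiF k f s j = contour_integral (circlepath 0 (rootRadius k s))
      (\<lambda>\<zeta>. f \<zeta> * \<zeta> ^ j * deriv (Ppoly k s) \<zeta> / Ppoly k s \<zeta>) / (2 * \<i> * pi)"

end

theory Submission
  imports Defs
begin

lemma cauchy_aux: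
  fixes f g :: "complex \<Rightarrow> complex"
  assumes hol: "f holomorphic_on UNIV" and R: "cmod a < R"
    and eq: "\<And>u. cmod u = R \<Longrightarrow> g u = c * (f u / (u - a))"
  shows "contour_integral (circlepath 0 R) g / (2 * \<i> * pi) = c * f a"
proof -
  have "((\<lambda>u. f u/(u-a)) has_contour_integral (2 * of_real pi * \<i> * f a)) (circlepath 0 R)"
    by (rule Cauchy_integral_circlepath_simple) (use hol R in \<open>auto intro: holomorphic_on_subset\<close>)
  then have "((\<lambda>u. c * (f u/(u-a))) has_contour_integral (c * (2 * of_real pi * \<i> * f a))) (circlepath 0 R)"
    by (rule has_contour_integral_lmul)
  then have "(g has_contour_integral (c * (2 * of_real pi * \<i> * f a))) (circlepath 0 R)"
  proof (rule has_contour_integral_eq)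
    fix x assume "x \<in> path_image (circlepath 0 R)"
    moreover have "\<bar>R\<bar> = R" using R norm_ge_zero[of a] by linarith
    ultimately have "cmod x = R" by simp
    then show "c * (f x / (x - a)) = g x" using eq[of x] by simp
  qed
  then have "contour_integral (circlepath 0 R) g = c * (2 * of_real pi * \<i> * f a)"
    by (rule contour_integral_unique)
  then show ?thesis by (simp add: field_simps)
qed

lemma Ppoly_phi:
  assumes "k \<ge> 2"
  shows "Ppoly k (\<lambda>h. if h = 1 then a else 0) z = z ^ k - a * z ^ (k - 1)"
proof -
  have "Ppoly k (\<lambda>h. if h = 1 then a else 0) z =
        (\<Sum>h=0..k. (if h = 0 then z ^ k else if h = 1 then - a * z ^ (k - 1) else 0))"
    unfolding Ppoly_def coordP_def by (rule sum.cong) auto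
  also have "\<dots> = z ^ k - a * z ^ (k - 1)"
    using assms by (simp add: sum.If_cases)
  finally show ?thesis .
qed

lemma Ppoly_psi:
  "Ppoly k (\<lambda>h. of_nat (k choose h) * a ^ h) = (\<lambda>z. (z - a) ^ k)"
proof
  fix z
  have "(z - a) ^ k = ((-a) + z) ^ k" by simp
  also have "\<dots> = (\<Sum>h\<le>k. of_nat (k choose h) * (-a) ^ h * z ^ (k - h))"
    by (rule binomial_ring)
  also have "\<dots> = Ppoly k (\<lambda>h. of_nat (k choose h) * a ^ h) z"
    unfolding Ppoly_def coordP_def atMost_atLeast0
  proof (rule sum.cong[OF refl])
    fix h assume "h \<in> {0..k}"
    show "of_nat (k choose h) * (-a) ^ h * z ^ (k - h) =
      (-1) ^ h * (if h = 0 then 1 else of_nat (k choose h) * a ^ h) * z ^ (k - h)"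
      by (cases "h = 0") (simp_all only: power_minus[of a h] mult_ac, simp_all)
  qed
  finally show "Ppoly k (\<lambda>h. of_nat (k choose h) * a ^ h) z = (z - a) ^ k" ..
qed

theorem mainTheorem2:
  fixes k :: nat and f :: "complex \<Rightarrow> complex"
  assumes "k \<ge> 2"
    and "f holomorphic_on UNIV"
    and "\<exists>z. f z \<noteq> 0"
  shows "(\<exists>s. \<exists>j<k. PhiF k f s j \<noteq> 0) \<and> (\<exists>s. \<exists>j<k. PsiF k f s j \<noteq> 0)"
proof
  obtain a where fa: "f a \<noteq> 0" using assms(3) by blast
  show "\<exists>s. \<exists>j<k. PhiF k f s j \<noteq> 0"
  proof (intro exI conjI)
    let ?s = "\<lambda>h. if h = 1 then a else 0"
    have R: "rootRadius k ?s = 1 + cmod a"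
    proof -
      have "(\<Sum>h=1..k. cmod (?s h)) = (\<Sum>h\<in>{1..k}. if h = 1 then cmod a else 0)"
        by (rule sum.cong) auto
      also have "\<dots> = cmod a" using assms(1) by simp
      finally show ?thesis unfolding rootRadius_def by simp
    qed
    have "PhiF k f ?s (k - 1) = 1 * f a"
      unfolding PhiF_def R
    proof (rule cauchy_aux[OF assms(2)])
      show "cmod a < 1 + cmod a" by simp
      fix u :: complex assume u: "cmod u = 1 + cmod a"
      have u0: "u \<noteq> 0"
      proof
        assume "u = 0"
        with u have "1 + cmod a = 0" by simp
        with norm_ge_zero[of a] show False by linarith
      qed
      have kk: "k = Suc (k - 1)" using assms(1) by simp
      have "u ^ k = u ^ (k - 1) * u" by (subst kk) (simp only: power_Suc2 diff_Suc_1)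
      then have "u ^ k - a * u ^ (k - 1) = u ^ (k - 1) * (u - a)"
        by (simp add: algebra_simps)
      then have P: "Ppoly k ?s u = u ^ (k - 1) * (u - a)"
        using Ppoly_phi[OF assms(1), of a u] by simp
      show "f u * u ^ (k - 1) / Ppoly k ?s u = 1 * (f u / (u - a))"
        unfolding P using u0 by simp
    qed
    then show "PhiF k f ?s (k - 1) \<noteq> 0" using fa by simp
    show "k - 1 < k" using assms(1) by simp
  qed
  show "\<exists>s. \<exists>j<k. PsiF k f s j \<noteq> 0"
  proof (intro exI conjI)
    let ?s = "\<lambda>h. of_nat (k choose h) * a ^ h :: complex"
    have R: "cmod a < rootRadius k ?s"
    proof -
      have "cmod (?s 1) \<le> (\<Sum>h=1..k. cmod (?s h))"
        by (rule member_le_sum) (use assms(1) in auto)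
      moreover have "cmod (?s 1) = of_nat k * cmod a" by (simp add: norm_mult)
      moreover have "cmod a \<le> of_nat k * cmod a" using assms(1)
        by (simp add: mult_le_cancel_right1)
      ultimately show ?thesis unfolding rootRadius_def by simp
    qed
    have D: "deriv (Ppoly k ?s) u = of_nat k * (u - a) ^ (k - 1)" for u
      unfolding Ppoly_psi
      by (rule DERIV_imp_deriv) (auto intro!: derivative_eq_intros)
    have "PsiF k f ?s 0 = of_nat k * f a"
      unfolding PsiF_def
    proof (rule cauchy_aux[OF assms(2) R])
      fix u :: complex assume u: "cmod u = rootRadius k ?s"
      then have ua: "u - a \<noteq> 0" using R by auto
      have kk: "k = Suc (k - 1)" using assms(1) by simp
      have pk: "(u - a) ^ k = (u - a) ^ (k - 1) * (u - a)"
        by (subst kk) (simp only: power_Suc2 diff_Suc_1)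
      have P: "Ppoly k ?s u = (u - a) ^ (k - 1) * (u - a)"
        unfolding Ppoly_psi pk ..
      have nz: "(u - a) ^ (k - 1) \<noteq> 0" using ua by simp
      show "f u * u ^ 0 * deriv (Ppoly k ?s) u / Ppoly k ?s u = of_nat k * (f u / (u - a))"
        unfolding D P using nz ua by (simp add: field_simps)
    qed
    then show "PsiF k f ?s 0 \<noteq> 0" using fa assms(1) by simp
    show "0 < k" using assms(1) by simp
  qed
qed

end
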